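(* Let $\mathcal{A}$ be a finite set of integers greater than $1$. Then there exist permutations $X\neq X'$ such that $C_aX=C_aX'$ for all $a\in\mathcal{A}$.
   Context: A finite dynamical system (FDS) is a function on a finite set, considered up to isomorphism of functional graphs; the product $AB$ acts on $S_A\times S_B$ by $(a,b)\mapsto(A(a),B(b))$. A permutation is a bijective FDS. $C_n$ denotes the FDS whose functional graph is a directed cycle of length $n$. *)

theory Defs
  imports Main
begin

text \<open>A finite dynamical system (FDS) is represented by a finite carrier set S
  together with a function f mapping S into S (values outside S are irrelevant).\<close>

definition is_fds :: "'a set \<Rightarrow> ('a \<Rightarrow> 'a) \<Rightarrow> bool" where
  "is_fds S f \<longleftrightarrow> finite S \<and> f ` S \<subseteq> S"

definition is_perm_fds :: "'a set \<Rightarrow> ('a \<Rightarrow> 'a) \<Rightarrow> bool" where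
  "is_perm_fds S f \<longleftrightarrow> is_fds S f \<and> bij_betw f S S"

definition fds_iso :: "'a set \<Rightarrow> ('a \<Rightarrow> 'a) \<Rightarrow> 'b set \<Rightarrow> ('b \<Rightarrow> 'b) \<Rightarrow> bool" where
  "fds_iso S f T g \<longleftrightarrow> (\<exists>h. bij_betw h S T \<and> (\<forall>x\<in>S. h (f x) = g (h x)))"

definition fds_prod_set :: "'a set \<Rightarrow> 'b set \<Rightarrow> ('a \<times> 'b) set" where
  "fds_prod_set S T = S \<times> T"

definition fds_prod_fun :: "('a \<Rightarrow> 'a) \<Rightarrow> ('b \<Rightarrow> 'b) \<Rightarrow> ('a \<times> 'b \<Rightarrow> 'a \<times> 'b)" where
  "fds_prod_fun f g = (\<lambda>(a, b). (f a, g b))"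

definition cycle_set :: "nat \<Rightarrow> nat set" where
  "cycle_set n = {0..<n}"

definition cycle_fun :: "nat \<Rightarrow> nat \<Rightarrow> nat" where
  "cycle_fun n = (\<lambda>i. (i + 1) mod n)"

end

theory Submission
  imports Defs "HOL-Library.Countable"
begin

lemma iso_trans: "fds_iso S f T g \<Longrightarrow> fds_iso T g U k \<Longrightarrow> fds_iso S f U k"
  unfolding fds_iso_def
proof (elim exE conjE)
  fix h1 h2 assume b1: "bij_betw h1 S T" and c1: "\<forall>x\<in>S. h1 (f x) = g (h1 x)"
    and b2: "bij_betw h2 T U" and c2: "\<forall>x\<in>T. h2 (g x) = k (h2 x)"
  show "\<exists>h. bij_betw h S U \<and> (\<forall>x\<in>S. h (f x) = k (h x))"
    apply (rule exI[of _ "h2 \<circ> h1"])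
    using b1 b2 c1 c2 bij_betw_trans[OF b1 b2] by (auto simp: bij_betw_def)
qed

lemma iso_prod: "fds_iso S f T g \<Longrightarrow>
  fds_iso (fds_prod_set C S) (fds_prod_fun c f) (fds_prod_set C T) (fds_prod_fun c g)"
  unfolding fds_iso_def fds_prod_set_def fds_prod_fun_def
proof (elim exE conjE)
  fix h assume b: "bij_betw h S T" and cc: "\<forall>x\<in>S. h (f x) = g (h x)"
  show "\<exists>h. bij_betw h (C \<times> S) (C \<times> T) \<and> (\<forall>x\<in>C \<times> S. h (case x of (a, b) \<Rightarrow> (c a, f b)) = (case h x of (a, b) \<Rightarrow> (c a, g b)))"
    apply (rule exI[of _ "map_prod id h"])
    using b cc by (auto intro: bij_betw_map_prod bij_betw_id)
qed

lemma iso_fix: "fds_iso S f T g \<Longrightarrow> x \<in> S \<Longrightarrow> f x = x \<Longrightarrow> \<exists>y\<in>T. g y = y"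
  unfolding fds_iso_def bij_betw_def by (metis imageI)

lemma iso_to_nat: "fds_iso S (F :: 'a::countable \<Rightarrow> 'a) (to_nat ` S) (\<lambda>y. to_nat (F (from_nat y)))"
  unfolding fds_iso_def
  by (rule exI[of _ to_nat]) (auto simp: bij_betw_def inj_on_def)

lemma iso_from_nat: "fds_iso (to_nat ` S) (\<lambda>y. to_nat (F (from_nat y))) S (F :: 'a::countable \<Rightarrow> 'a)"
  unfolding fds_iso_def
  apply (rule exI[of _ from_nat])
  apply (auto simp: bij_betw_def inj_on_def image_image)
  done

lemma perm_to_nat: "is_perm_fds S (F :: 'a::countable \<Rightarrow> 'a) \<Longrightarrow>
   is_perm_fds (to_nat ` S) (\<lambda>y. to_nat (F (from_nat y)))"
  unfolding is_perm_fds_def is_fds_def bij_betw_def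
  apply (auto simp: inj_on_def image_image)
  by (metis (no_types, lifting) image_iff)


definition par_set :: "nat list \<Rightarrow> bool \<Rightarrow> (bool list \<times> nat list) set" where
  "par_set as p = {(s,v). length s = length as \<and> length v = length as \<and>
      (\<forall>i<length as. v!i < as!i) \<and> (even (length (filter id s)) = p)}"

definition stepF :: "nat list \<Rightarrow> bool list \<times> nat list \<Rightarrow> bool list \<times> nat list" where
  "stepF as = (\<lambda>(s,v). (s, map (\<lambda>i. if s!i then Suc (v!i) mod (as!i) else v!i) [0..<length as]))"

definition swapH :: "nat list \<Rightarrow> nat \<Rightarrow> nat \<times> (bool list \<times> nat list) \<Rightarrow> nat \<times> (bool list \<times> nat list)" where
  "swapH as j = (\<lambda>(c,(s,v)). (c, (s[j := \<not> s!j],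
      v[j := if s!j then (v!j + as!j - c) mod as!j else (v!j + c) mod as!j])))"

lemma finite_par_set: "finite (par_set as p)"
proof -
  have "par_set as p \<subseteq> {s. set s \<subseteq> UNIV \<and> length s = length as} \<times>
        {v. set v \<subseteq> {..<sum_list as} \<and> length v = length as}"
  proof (clarsimp simp: par_set_def)
    fix s v x assume "length v = length as" "\<forall>i<length as. v ! i < as ! i" "x \<in> set v"
    then obtain i where i: "i < length as" "x = v!i" by (metis in_set_conv_nth)
    have "as!i \<le> sum_list as" using i(1) by (simp add: elem_le_sum_list)
    then show "x < sum_list as" using i \<open>\<forall>i<length as. v ! i < as ! i\<close> by fastforce
  qed
  moreover have "finite ({s. set s \<subseteq> (UNIV::bool set) \<and> length s = length as} \<times>
        {v. set v \<subseteq> {..<sum_list as} \<and> length v = length as})"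
    by (intro finite_cartesian_product finite_lists_length_eq) auto
  ultimately show ?thesis by (rule finite_subset)
qed

lemma step_in: assumes "\<forall>i<length as. as!i > 0" "x \<in> par_set as p"
  shows "stepF as x \<in> par_set as p"
  using assms by (auto simp: par_set_def stepF_def split: prod.splits)

lemma step_inj: "inj_on (stepF as) (par_set as p)"
proof (rule inj_onI)
  fix x y assume x: "x \<in> par_set as p" and y: "y \<in> par_set as p" and e: "stepF as x = stepF as y"
  obtain s v where xs: "x = (s,v)" by fastforce
  obtain t w where ys: "y = (t,w)" by fastforce
  have st: "s = t" using e xs ys by (simp add: stepF_def)
  have "v = w"
  proof (rule nth_equalityI)
    show "length v = length w" using x y xs ys by (simp add: par_set_def)
    fix i assume i: "i < length v"
    hence il: "i < length as" using x xs by (simp add: par_set_def)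
    have "(if s!i then Suc (v!i) mod (as!i) else v!i) = (if s!i then Suc (w!i) mod (as!i) else w!i)"
      using e xs ys st il by (simp add: stepF_def)
    moreover have "v!i < as!i" "w!i < as!i" using x y xs ys il by (auto simp: par_set_def)
    ultimately show "v!i = w!i"
      by (cases "s!i") (auto simp: mod_Suc split: if_splits)
  qed
  then show "x = y" using xs ys st by simp
qed

lemma perm_par: assumes "\<forall>i<length as. as!i > 0"
  shows "is_perm_fds (par_set as p) (stepF as)"
proof -
  have sub: "stepF as ` par_set as p \<subseteq> par_set as p" using step_in[OF assms] by blast
  show ?thesis unfolding is_perm_fds_def is_fds_def bij_betw_def
    using sub finite_par_set step_inj endo_inj_surj[OF finite_par_set sub step_inj] by blast
qed


lemma parity_toggle: "j < length s \<Longrightarrow>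
   even (length (filter id (s[j := \<not> s!j]))) = (\<not> even (length (filter id s)))"
proof -
  assume j: "j < length s"
  have e1: "s = take j s @ s!j # drop (Suc j) s" using j by (simp add: id_take_nth_drop)
  have e2: "s[j := \<not> s!j] = take j s @ (\<not> s!j) # drop (Suc j) s" using j by (simp add: upd_conv_take_nth_drop)
  define A where "A = length (filter id (take j s))"
  define B where "B = length (filter id (drop (Suc j) s))"
  have l1: "length (filter id s) = A + (if s!j then 1 else 0) + B"
    unfolding A_def B_def by (subst e1) simp
  have l2: "length (filter id (s[j := \<not> s!j])) = A + (if s!j then 0 else 1) + B"
    unfolding A_def B_def by (subst e2) simp
  show ?thesis using l1 l2 by (cases "s!j") auto
qed

lemma parity_toggle2:
  "j < length s \<Longrightarrow> s!j \<Longrightarrow> even (length (filter id (s[j := False]))) = (\<not> even (length (filter id s)))"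
  "j < length s \<Longrightarrow> \<not> s!j \<Longrightarrow> even (length (filter id (s[j := True]))) = (\<not> even (length (filter id s)))"
  using parity_toggle[of j s] by auto

lemma swap_in: assumes j: "j < length as" and pos: "as!j > 0"
  and x: "x \<in> cycle_set (as!j) \<times> par_set as p"
  shows "swapH as j x \<in> cycle_set (as!j) \<times> par_set as (\<not> p)"
  using x j pos parity_toggle2[of j]
  by (auto simp: cycle_set_def par_set_def swapH_def nth_list_update split: prod.splits)

lemma swap_inv: assumes j: "j < length as" and pos: "as!j > 0"
  and x: "x \<in> cycle_set (as!j) \<times> par_set as p"
  shows "swapH as j (swapH as j x) = x"
proof -
  obtain c s v where xs: "x = (c,s,v)" by (cases x) auto
  have c: "c < as!j" and vj: "v!j < as!j" and ls: "length s = length as" and lv: "length v = length as"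
    using x xs j by (auto simp: cycle_set_def par_set_def)
  have m1: "((v!j + as!j - c) mod as!j + c) mod as!j = v!j"
  proof -
    have "((v!j + as!j - c) mod as!j + c) mod as!j = ((v!j + as!j - c) + c) mod as!j"
      by (simp add: mod_add_left_eq)
    also have "\<dots> = (v!j + as!j) mod as!j" using c by simp
    also have "\<dots> = v!j" using vj by simp
    finally show ?thesis .
  qed
  have m2: "((v!j + c) mod as!j + as!j - c) mod as!j = v!j"
  proof -
    have "int (((v!j + c) mod as!j + as!j - c) mod as!j) = ((int (v!j) + int c) mod int (as!j) + int (as!j) - int c) mod int (as!j)"
      using c by (simp add: zmod_int of_nat_diff)
    also have "\<dots> = (int (v!j) + int c + int (as!j) - int c) mod int (as!j)"
      by (metis (no_types, opaque_lifting) diff_add_eq mod_add_left_eq mod_diff_left_eq)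
    also have "\<dots> = int (v!j)" using vj by simp
    finally show ?thesis by linarith
  qed
  show ?thesis using xs j ls lv m1 m2 by (auto simp: swapH_def nth_list_update)
qed


lemma arith1: assumes "c < (a::nat)" shows "(Suc v mod a + a - Suc c mod a) mod a = (v + a - c) mod a"
proof -
  have a0: "a > 0" using assms by simp
  have "Suc c mod a \<le> a" using a0 by (simp add: order_less_imp_le)
  hence "int ((Suc v mod a + a - Suc c mod a) mod a) = ((int v + 1) mod int a + int a - (int c + 1) mod int a) mod int a"
    by (simp add: zmod_int of_nat_diff ac_simps)
  also have "\<dots> = (int v + 1 + int a - (int c + 1)) mod int a"
    by (metis (no_types, opaque_lifting) diff_add_eq mod_add_left_eq mod_diff_eq)
  also have "\<dots> = (int v + int a - int c) mod int a" by (simp add: algebra_simps)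
  also have "\<dots> = int ((v + a - c) mod a)" using assms by (simp add: zmod_int of_nat_diff)
  finally show ?thesis by linarith
qed

lemma arith2: "(v + Suc c mod a) mod a = Suc ((v + c) mod a) mod (a::nat)"
  by (metis add_Suc_right mod_add_right_eq mod_Suc_eq)

lemma swap_comm: assumes j: "j < length as" and pos: "\<forall>i<length as. as!i > 0"
  and x: "x \<in> cycle_set (as!j) \<times> par_set as p"
  shows "swapH as j (fds_prod_fun (cycle_fun (as!j)) (stepF as) x) =
         fds_prod_fun (cycle_fun (as!j)) (stepF as) (swapH as j x)"
proof -
  obtain c s v where xs: "x = (c,s,v)" by (cases x) auto
  have c: "c < as!j" and vj: "v!j < as!j" and ls: "length s = length as" and lv: "length v = length as"
    using x xs j by (auto simp: cycle_set_def par_set_def)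
  let ?u = "map (\<lambda>i. if s!i then Suc (v!i) mod (as!i) else v!i) [0..<length as]"
  let ?s' = "s[j := \<not> s!j]"
  let ?v' = "v[j := if s!j then (v!j + as!j - c) mod as!j else (v!j + c) mod as!j]"
  have L: "swapH as j (fds_prod_fun (cycle_fun (as!j)) (stepF as) x) =
     (Suc c mod as!j, ?s', ?u[j := if s!j then (?u!j + as!j - Suc c mod as!j) mod as!j else (?u!j + Suc c mod as!j) mod as!j])"
    using xs by (simp add: swapH_def fds_prod_fun_def stepF_def cycle_fun_def)
  have R: "fds_prod_fun (cycle_fun (as!j)) (stepF as) (swapH as j x) =
     (Suc c mod as!j, ?s', map (\<lambda>i. if ?s'!i then Suc (?v'!i) mod (as!i) else ?v'!i) [0..<length as])"
    using xs by (simp add: swapH_def fds_prod_fun_def stepF_def cycle_fun_def)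
  have "?u[j := if s!j then (?u!j + as!j - Suc c mod as!j) mod as!j else (?u!j + Suc c mod as!j) mod as!j]
     = map (\<lambda>i. if ?s'!i then Suc (?v'!i) mod (as!i) else ?v'!i) [0..<length as]"
  proof (rule nth_equalityI)
    show "length (?u[j := if s!j then (?u!j + as!j - Suc c mod as!j) mod as!j else (?u!j + Suc c mod as!j) mod as!j]) =
      length (map (\<lambda>i. if ?s'!i then Suc (?v'!i) mod (as!i) else ?v'!i) [0..<length as])" by simp
    fix i assume i: "i < length (?u[j := if s!j then (?u!j + as!j - Suc c mod as!j) mod as!j else (?u!j + Suc c mod as!j) mod as!j])"
    hence il: "i < length as" by simp
    show "(?u[j := if s!j then (?u!j + as!j - Suc c mod as!j) mod as!j else (?u!j + Suc c mod as!j) mod as!j]) ! i =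
      map (\<lambda>i. if ?s'!i then Suc (?v'!i) mod (as!i) else ?v'!i) [0..<length as] ! i"
    proof (cases "i = j")
      case True
      then show ?thesis using j ls lv c arith1[OF c, of "v!j"] arith2[of "v!j" c "as!j"]
        by (cases "s!j") (simp_all add: nth_list_update)
    next
      case False
      then show ?thesis using il j ls lv by (simp add: nth_list_update)
    qed
  qed
  then show ?thesis using L R by simp
qed

lemma swap_iso: assumes j: "j < length as" and pos: "\<forall>i<length as. as!i > 0"
  shows "fds_iso (fds_prod_set (cycle_set (as!j)) (par_set as p)) (fds_prod_fun (cycle_fun (as!j)) (stepF as))
                 (fds_prod_set (cycle_set (as!j)) (par_set as (\<not> p))) (fds_prod_fun (cycle_fun (as!j)) (stepF as))"
  unfolding fds_iso_def
proof (rule exI[of _ "swapH as j"], intro conjI ballI)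
  have pj: "as!j > 0" using pos j by simp
  show "bij_betw (swapH as j) (fds_prod_set (cycle_set (as ! j)) (par_set as p))
     (fds_prod_set (cycle_set (as ! j)) (par_set as (\<not> p)))"
    unfolding fds_prod_set_def
  proof (rule bij_betw_byWitness[where f'="swapH as j"])
    show "\<forall>a\<in>cycle_set (as ! j) \<times> par_set as p. swapH as j (swapH as j a) = a"
      using swap_inv[OF j pj, of _ p] by blast
    show "\<forall>a\<in>cycle_set (as ! j) \<times> par_set as (\<not> p). swapH as j (swapH as j a) = a"
      using swap_inv[OF j pj, of _ "\<not> p"] by blast
    show "swapH as j ` (cycle_set (as ! j) \<times> par_set as p) \<subseteq> cycle_set (as ! j) \<times> par_set as (\<not> p)"
      using swap_in[OF j pj, of _ p] by blast
    show "swapH as j ` (cycle_set (as ! j) \<times> par_set as (\<not> p)) \<subseteq> cycle_set (as ! j) \<times> par_set as p"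
      using swap_in[OF j pj, of _ "\<not> p", unfolded not_not] by blast
  qed
  fix x assume "x \<in> fds_prod_set (cycle_set (as ! j)) (par_set as p)"
  then show "swapH as j (fds_prod_fun (cycle_fun (as ! j)) (stepF as) x) =
         fds_prod_fun (cycle_fun (as ! j)) (stepF as) (swapH as j x)"
    using swap_comm[OF j pos] by (simp add: fds_prod_set_def)
qed


lemma no_fix: assumes pos: "\<forall>i<length as. as!i > 1" and z: "z \<in> par_set as False"
  shows "stepF as z \<noteq> z"
proof
  assume e: "stepF as z = z"
  obtain s v where zs: "z = (s,v)" by (cases z) auto
  have ls: "length s = length as" and lv: "length v = length as" and vb: "\<forall>i<length as. v!i < as!i"
    and od: "odd (length (filter id s))" using z zs by (auto simp: par_set_def)
  have "filter id s \<noteq> []" using od by auto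
  then obtain i where i: "i < length s" "s!i" by (metis filter_False in_set_conv_nth id_apply)
  have "map (\<lambda>i. if s!i then Suc (v!i) mod (as!i) else v!i) [0..<length as] = v"
    using e zs by (simp add: stepF_def)
  hence "(map (\<lambda>i. if s!i then Suc (v!i) mod (as!i) else v!i) [0..<length as]) ! i = v!i" by simp
  hence "Suc (v!i) mod (as!i) = v!i" using i ls by simp
  moreover have "v!i < as!i" "as!i > 1" using vb pos i ls by auto
  ultimately show False by (cases "Suc (v!i) = as!i") (auto simp: mod_Suc)
qed

theorem mainTheorem15:
  fixes A :: "int set"
  assumes "finite A" and "\<forall>a\<in>A. a > 1"
  shows "\<exists>(S :: nat set) (f :: nat \<Rightarrow> nat) (T :: nat set) (g :: nat \<Rightarrow> nat).
           is_perm_fds S f \<and> is_perm_fds T g \<and> \<not> fds_iso S f T g \<and>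
           (\<forall>a\<in>A. fds_iso (fds_prod_set (cycle_set (nat a)) S) (fds_prod_fun (cycle_fun (nat a)) f)
                           (fds_prod_set (cycle_set (nat a)) T) (fds_prod_fun (cycle_fun (nat a)) g))"
proof -
  obtain xs where xs: "set xs = A" using finite_list[OF assms(1)] by blast
  define as where "as = map nat xs"
  have pos1: "\<forall>i<length as. as!i > 1" using assms(2) xs by (auto simp: as_def)
  hence pos: "\<forall>i<length as. as!i > 0" by auto
  define F where "F = stepF as"
  define S where "S = to_nat ` par_set as True"
  define f where "f = (\<lambda>y. to_nat (F (from_nat y :: bool list \<times> nat list)))"
  define T where "T = to_nat ` par_set as False"
  show ?thesis
  proof (rule exI[of _ S], rule exI[of _ f], rule exI[of _ T], rule exI[of _ f], intro conjI ballI)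
    show "is_perm_fds S f" unfolding S_def f_def F_def by (rule perm_to_nat[OF perm_par[OF pos]])
    show "is_perm_fds T f" unfolding T_def f_def F_def by (rule perm_to_nat[OF perm_par[OF pos]])
    show "\<not> fds_iso S f T f"
    proof
      assume iso: "fds_iso S f T f"
      define x0 where "x0 = (replicate (length as) False, replicate (length as) (0::nat))"
      have x0: "x0 \<in> par_set as True" unfolding x0_def par_set_def using pos by auto
      have fx0: "F x0 = x0" unfolding x0_def F_def stepF_def by (auto intro!: nth_equalityI)
      have "to_nat x0 \<in> S" "f (to_nat x0) = to_nat x0" using x0 fx0 by (auto simp: S_def f_def)
      then obtain y where y: "y \<in> T" "f y = y" using iso_fix[OF iso] by blast
      then obtain z where z: "z \<in> par_set as False" "y = to_nat z" by (auto simp: T_def)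
      have "F z = z" using y z by (simp add: f_def)
      then show False using no_fix[OF pos1 z(1)] by (simp add: F_def)
    qed
    fix a assume a: "a \<in> A"
    then obtain j where j: "j < length xs" "xs!j = a" using xs by (metis in_set_conv_nth)
    have aj: "nat a = as!j" and jl: "j < length as" using j by (auto simp: as_def)
    have i1: "fds_iso (fds_prod_set (cycle_set (nat a)) S) (fds_prod_fun (cycle_fun (nat a)) f)
       (fds_prod_set (cycle_set (nat a)) (par_set as True)) (fds_prod_fun (cycle_fun (nat a)) F)"
      unfolding S_def f_def by (rule iso_prod[OF iso_from_nat])
    have i2: "fds_iso (fds_prod_set (cycle_set (nat a)) (par_set as True)) (fds_prod_fun (cycle_fun (nat a)) F)
       (fds_prod_set (cycle_set (nat a)) (par_set as False)) (fds_prod_fun (cycle_fun (nat a)) F)"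
      using swap_iso[OF jl pos, of True] unfolding aj F_def by simp
    have i3: "fds_iso (fds_prod_set (cycle_set (nat a)) (par_set as False)) (fds_prod_fun (cycle_fun (nat a)) F)
       (fds_prod_set (cycle_set (nat a)) T) (fds_prod_fun (cycle_fun (nat a)) f)"
      unfolding T_def f_def by (rule iso_prod[OF iso_to_nat])
    show "fds_iso (fds_prod_set (cycle_set (nat a)) S) (fds_prod_fun (cycle_fun (nat a)) f)
       (fds_prod_set (cycle_set (nat a)) T) (fds_prod_fun (cycle_fun (nat a)) f)"
      using iso_trans[OF iso_trans[OF i1 i2] i3] .
  qed
qed

end
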